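(* Let $m\ge2$ and let $p\in S_m$ be indecomposable and avoid the pattern $321$. Let $\lambda$ be the number of left-to-right maxima of $p$ (i.e. the number of indices $j$ such that $p_i<p_j$ for all $i<j$). Let $n\ge2$ and let $\omega\in\widetilde{S}_n$ avoid $p$. Then $\left\lfloor |\omega_\beta-\omega_\alpha|/n\right\rfloor\le m^{\lambda+1}+1$ for all $1\le\alpha<\beta\le n$, and consequently $\ell(\omega)\le\left(m^{\lambda+1}+2\right)\binom{n}{2}$.
   Context: For $n\ge 2$, the affine symmetric group $\widetilde{S}_n$ is the set of bijections $\omega:\mathbb{Z}\to\mathbb{Z}$ such that $\omega(i+n)=\omega(i)+n$ for all $i\in\mathbb{Z}$ and $\sum_{i=1}^n\omega(i)=\binom{n+1}{2}$; write $\omega_i=\omega(i)$. The length $\ell(\omega)$ is the number of pairs $(i,j)$ of integers with $1\le i\le n$, $i<j$, and $\omega_i>\omega_j$. For $p\in S_k$, $\omega$ contains $p$ if there exist integers $i_1<\cdots<i_k$ such that $\omega_{i_1}\cdots\omega_{i_k}$ has the same relative order as $p_1\cdots p_k$; otherwise $\omega$ avoids $p$. A permutation $p\in S_m$ is decomposable if there exists $1\le j\le m-1$ with $\{p_1,\dots,p_j\}=\{1,\dots,j\}$, and indecomposable otherwise. *)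

theory Defs
  imports "HOL-Combinatorics.Permutations"
begin

definition affine_perm :: "nat \<Rightarrow> (int \<Rightarrow> int) \<Rightarrow> bool" where
  "affine_perm n w \<longleftrightarrow> bij w \<and> (\<forall>i. w (i + int n) = w i + int n)
     \<and> (\<Sum>i\<in>{1..int n}. w i) = int ((n + 1) choose 2)"

definition affine_length :: "nat \<Rightarrow> (int \<Rightarrow> int) \<Rightarrow> nat" where
  "affine_length n w = card {(i, j). 1 \<le> i \<and> i \<le> int n \<and> i < j \<and> w i > w j}"

definition affine_contains :: "(int \<Rightarrow> int) \<Rightarrow> nat \<Rightarrow> (nat \<Rightarrow> nat) \<Rightarrow> bool" where
  "affine_contains w k q \<longleftrightarrow> (\<exists>idx :: nat \<Rightarrow> int. strict_mono_on {1..k} idx \<and>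
     (\<forall>a\<in>{1..k}. \<forall>b\<in>{1..k}. (w (idx a) < w (idx b) \<longleftrightarrow> q a < q b)))"

definition perm_contains :: "nat \<Rightarrow> (nat \<Rightarrow> nat) \<Rightarrow> nat \<Rightarrow> (nat \<Rightarrow> nat) \<Rightarrow> bool" where
  "perm_contains m p k q \<longleftrightarrow> (\<exists>idx :: nat \<Rightarrow> nat. strict_mono_on {1..k} idx \<and>
     idx ` {1..k} \<subseteq> {1..m} \<and>
     (\<forall>a\<in>{1..k}. \<forall>b\<in>{1..k}. (p (idx a) < p (idx b) \<longleftrightarrow> q a < q b)))"

definition pat321 :: "nat \<Rightarrow> nat" where
  "pat321 i = 4 - i"

definition indecomposable :: "nat \<Rightarrow> (nat \<Rightarrow> nat) \<Rightarrow> bool" where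
  "indecomposable m p \<longleftrightarrow> \<not> (\<exists>j. 1 \<le> j \<and> j \<le> m - 1 \<and> p ` {1..j} = {1..j})"

definition num_ltr_maxima :: "nat \<Rightarrow> (nat \<Rightarrow> nat) \<Rightarrow> nat" where
  "num_ltr_maxima m p = card {j \<in> {1..m}. \<forall>i. 1 \<le> i \<and> i < j \<longrightarrow> p i < p j}"

end

theory Submission
  imports Defs
begin


definition upper :: "(nat \<Rightarrow> nat) \<Rightarrow> nat \<Rightarrow> bool" where
  "upper p j \<longleftrightarrow> (\<forall>i. 1 \<le> i \<and> i < j \<longrightarrow> p i < p j)"

definition rk :: "(nat \<Rightarrow> nat) \<Rightarrow> nat \<Rightarrow> nat" where
  "rk p N = card {j \<in> {1..N}. upper p j}"

lemma rk_Suc: "rk p (Suc N) = (if upper p (Suc N) then Suc (rk p N) else rk p N)"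
proof (cases "upper p (Suc N)")
  case True
  have e: "{j \<in> {1..Suc N}. upper p j} = insert (Suc N) {j \<in> {1..N}. upper p j}"
    using True by (auto simp: le_Suc_eq)
  have "Suc N \<notin> {j \<in> {1..N}. upper p j}" by simp
  then show ?thesis unfolding rk_def e using True by simp
next
  case False
  have e: "{j \<in> {1..Suc N}. upper p j} = {j \<in> {1..N}. upper p j}"
    using False by (auto simp: le_Suc_eq)
  show ?thesis unfolding rk_def e using False by simp
qed

lemma rk_mono: "N \<le> M \<Longrightarrow> rk p N \<le> rk p M"
  unfolding rk_def by (intro card_mono) auto

lemma rk_upper_pos:
  assumes "upper p N" "1 \<le> N" shows "1 \<le> rk p N"
proof -
  have "N \<in> {j \<in> {1..N}. upper p j}" using assms by auto
  then have "{j \<in> {1..N}. upper p j} \<noteq> {}" by blast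
  moreover have "finite {j \<in> {1..N}. upper p j}" by simp
  ultimately have "0 < card {j \<in> {1..N}. upper p j}" by (simp add: card_gt_0_iff)
  then show ?thesis unfolding rk_def by simp
qed

lemma upper_lt:
  assumes "upper p i'" "p i' < p i" "1 \<le> i"
  shows "i' < i"
proof (rule ccontr)
  assume "\<not> i' < i"
  then have "i = i' \<or> i < i'" by auto
  then show False
  proof
    assume "i = i'" then show False using assms(2) by simp
  next
    assume "i < i'"
    then have "p i < p i'" using assms(1) assms(3) unfolding upper_def by blast
    then show False using assms(2) by simp
  qed
qed

lemma upper_iff:
  assumes "inj p" "upper p i" "upper p j" "1 \<le> i" "1 \<le> j"
  shows "p i < p j \<longleftrightarrow> i < j"
proof
  assume "p i < p j" then show "i < j" using upper_lt[OF assms(2)] assms(5) by blast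
next
  assume "i < j" then show "p i < p j" using assms(3,4) unfolding upper_def by blast
qed

lemma not_upper:
  assumes "inj p" "\<not> upper p l"
  shows "\<exists>i. 1 \<le> i \<and> i < l \<and> p l < p i"
proof -
  obtain i where i: "1 \<le> i" "i < l" "\<not> p i < p l" using assms(2) unfolding upper_def by blast
  have "p i \<noteq> p l" using i(2) assms(1) unfolding inj_def by (metis less_irrefl)
  then have "p l < p i" using i(3) by simp
  then show ?thesis using i by blast
qed

lemma lower_lt:
  assumes "inj p" "\<not> perm_contains m p 3 pat321"
    "\<not> upper p l" "\<not> upper p l'" "l < l'" "l' \<le> m"
  shows "p l < p l'"
proof (rule ccontr)
  assume a: "\<not> p l < p l'"
  have "p l \<noteq> p l'" using assms(1,5) unfolding inj_def by (metis less_irrefl)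
  then have h1: "p l' < p l" using a by simp
  obtain i where i: "1 \<le> i" "i < l" "p l < p i" using not_upper[OF assms(1,3)] by blast
  define idx where "idx = (\<lambda>k::nat. if k = 1 then i else if k = 2 then l else l')"
  have "perm_contains m p 3 pat321"
    unfolding perm_contains_def
  proof (intro exI[of _ idx] conjI)
    show "strict_mono_on {1..3} idx"
      unfolding strict_mono_on_def idx_def using i assms(5) by auto
    show "idx ` {1..3} \<subseteq> {1..m}"
      unfolding idx_def using i assms(5,6) by auto
    have e: "{1..3::nat} = {1,2,3}" by auto
    have f: "p l < p i" "p l' < p l" "p l' < p i" "\<not> p i < p l" "\<not> p l < p l'" "\<not> p i < p l'"
      "\<not> p i < p i" "\<not> p l < p l" "\<not> p l' < p l'"
      using i h1 by auto
    show "\<forall>a\<in>{1..3}. \<forall>b\<in>{1..3}. (p (idx a) < p (idx b)) = (pat321 a < pat321 b)"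
      unfolding e by (simp add: idx_def pat321_def f)
  qed
  then show False using assms(2) by simp
qed



definition GG :: "nat \<Rightarrow> nat \<Rightarrow> nat \<Rightarrow> int" where
  "GG m a r = int m * 2 ^ (a - r)"
definition HH :: "nat \<Rightarrow> nat \<Rightarrow> nat \<Rightarrow> int" where
  "HH m a r = int m * (2 ^ (a - r) - 1)"

lemma GG_HH: "GG m a r = HH m a r + int m"
  unfolding GG_def HH_def by (simp add: algebra_simps)

lemma HH_step: "Suc r \<le> a \<Longrightarrow> HH m a r = HH m a (Suc r) + GG m a (Suc r)"
proof -
  assume "Suc r \<le> a"
  then have "a - r = Suc (a - Suc r)" by auto
  then show ?thesis unfolding GG_def HH_def by (simp add: algebra_simps)
qed

lemma HH_anti: "r \<le> r' \<Longrightarrow> HH m a r' \<le> HH m a r"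
proof -
  assume "r \<le> r'"
  then have "(2::int) ^ (a - r') \<le> 2 ^ (a - r)" using power_increasing[of "a - r'" "a - r" "2::int"] by simp
  then have "(2::int) ^ (a - r') - 1 \<le> 2 ^ (a - r) - 1" by linarith
  then show ?thesis unfolding HH_def by (intro mult_left_mono) auto
qed

definition Inv :: "nat \<Rightarrow> (nat \<Rightarrow> nat) \<Rightarrow> int \<Rightarrow> nat \<Rightarrow> (nat \<Rightarrow> int) \<Rightarrow> bool" where
  "Inv m p K N X \<longleftrightarrow>
    (\<forall>i j. 1 \<le> i \<and> i < j \<and> j \<le> N \<longrightarrow> X i < X j) \<and>
    (\<forall>i j. 1 \<le> i \<and> i < j \<and> j \<le> N \<and> upper p i \<and> \<not> upper p j \<longrightarrow> (X j - X i < K \<longleftrightarrow> p j < p i)) \<and>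
    (\<forall>j. 2 \<le> j \<and> j \<le> N \<and> upper p j \<longrightarrow> X (j - 1) + GG m (rk p m) (rk p j) \<le> X j) \<and>
    (\<forall>i. 1 \<le> i \<and> i \<le> N \<and> upper p i \<and> (\<forall>l. i < l \<and> l \<le> N \<and> \<not> upper p l \<longrightarrow> p l < p i)
        \<longrightarrow> X N + HH m (rk p m) (rk p N) + int m - int N \<le> X i + K - 1)"

lemma upper_1: "upper p (Suc 0)" unfolding upper_def by auto

lemma Inv_step:
  assumes inj: "inj p" and av: "\<not> perm_contains m p 3 pat321"
    and Kb: "int m * 2 ^ (rk p m - 1) \<le> K"
    and I: "Inv m p K N X" and N: "Suc N \<le> m"
  shows "\<exists>X'. Inv m p K (Suc N) X'"
proof -
  define a where "a = rk p m"
  have Ia: "\<And>i j. 1 \<le> i \<Longrightarrow> i < j \<Longrightarrow> j \<le> N \<Longrightarrow> X i < X j"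
    using I unfolding Inv_def by blast
  have Ia': "\<And>i j. 1 \<le> i \<Longrightarrow> i \<le> j \<Longrightarrow> j \<le> N \<Longrightarrow> X i \<le> X j"
    using Ia by (metis order_le_less)
  have Ib: "\<And>i j. 1 \<le> i \<Longrightarrow> i < j \<Longrightarrow> j \<le> N \<Longrightarrow> upper p i \<Longrightarrow> \<not> upper p j \<Longrightarrow> (X j - X i < K \<longleftrightarrow> p j < p i)"
    using I unfolding Inv_def by blast
  have Ic: "\<And>j. 2 \<le> j \<Longrightarrow> j \<le> N \<Longrightarrow> upper p j \<Longrightarrow> X (j - 1) + GG m a (rk p j) \<le> X j"
    using I unfolding Inv_def a_def by blast
  have Id: "\<And>i. 1 \<le> i \<Longrightarrow> i \<le> N \<Longrightarrow> upper p i \<Longrightarrow> (\<forall>l. i < l \<and> l \<le> N \<and> \<not> upper p l \<longrightarrow> p l < p i)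
        \<Longrightarrow> X N + HH m a (rk p N) + int m - int N \<le> X i + K - 1"
    using I unfolding Inv_def a_def by blast
  have rka: "rk p (Suc N) \<le> a" unfolding a_def using N by (rule rk_mono)
  have rkm: "\<And>i. i \<le> Suc N \<Longrightarrow> rk p i \<le> rk p (Suc N)" by (rule rk_mono)
  have Hb: "HH m a (rk p (Suc N)) + int m - int (Suc N) \<le> K - 1" if up: "upper p (Suc N)"
  proof -
    have "1 \<le> rk p (Suc N)" using rk_upper_pos[OF up] by auto
    then have "HH m a (rk p (Suc N)) \<le> HH m a 1" by (rule HH_anti)
    moreover have "HH m a 1 + int m = int m * 2 ^ (a - 1)" unfolding HH_def by (simp add: algebra_simps)
    ultimately show ?thesis using Kb unfolding a_def by linarith
  qed
  show ?thesis
  proof (cases "upper p (Suc N)")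
    case True
    define v where "v = X N + GG m a (rk p (Suc N))"
    define X' where "X' = X(Suc N := v)"
    have rkS: "rk p (Suc N) = Suc (rk p N)" using True by (simp add: rk_Suc)
    have G0: "0 \<le> GG m a r" for r unfolding GG_def by simp
    have "Inv m p K (Suc N) X'"
      unfolding Inv_def a_def[symmetric]
    proof (intro conjI allI impI)
      fix i j assume h: "1 \<le> i \<and> i < j \<and> j \<le> Suc N"
      show "X' i < X' j"
      proof (cases "j = Suc N")
        case True
        then have "X i \<le> X N" using h Ia' by auto
        moreover have "0 < GG m a (rk p (Suc N))" unfolding GG_def using N by simp
        ultimately show ?thesis using h True unfolding X'_def v_def by auto
      next
        case False then show ?thesis using h Ia unfolding X'_def by auto
      qed
    next
      fix i j assume h: "1 \<le> i \<and> i < j \<and> j \<le> Suc N \<and> upper p i \<and> \<not> upper p j"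
      then have "j \<noteq> Suc N" using True by auto
      then show "(X' j - X' i < K) = (p j < p i)" using h Ib unfolding X'_def by auto
    next
      fix j assume h: "2 \<le> j \<and> j \<le> Suc N \<and> upper p j"
      show "X' (j - 1) + GG m a (rk p j) \<le> X' j"
      proof (cases "j = Suc N")
        case True then show ?thesis unfolding X'_def v_def by auto
      next
        case False then show ?thesis using h Ic unfolding X'_def by auto
      qed
    next
      fix i assume h: "1 \<le> i \<and> i \<le> Suc N \<and> upper p i \<and> (\<forall>l. i < l \<and> l \<le> Suc N \<and> \<not> upper p l \<longrightarrow> p l < p i)"
      show "X' (Suc N) + HH m a (rk p (Suc N)) + int m - int (Suc N) \<le> X' i + K - 1"
      proof (cases "i = Suc N")
        case True then show ?thesis using Hb[OF \<open>upper p (Suc N)\<close>] unfolding X'_def by auto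
      next
        case False
        then have iN: "i \<le> N" using h by auto
        have "X N + HH m a (rk p N) + int m - int N \<le> X i + K - 1"
          using Id[of i] h iN by auto
        moreover have "HH m a (rk p N) = HH m a (rk p (Suc N)) + GG m a (rk p (Suc N))"
          using HH_step[of "rk p N" a m] rkS rka by auto
        ultimately show ?thesis using iN unfolding X'_def v_def by auto
      qed
    qed
    then show ?thesis by blast
  next
    case False
    note low = False
    have N1: "1 \<le> N" using False upper_1 by (cases N) auto
    define S where "S = {i. 1 \<le> i \<and> i \<le> N \<and> upper p i \<and> p i < p (Suc N)}"
    have finS: "finite S" unfolding S_def by auto
    define v where "v = Max (insert (X N + 1) ((\<lambda>i. X i + K) ` S))"
    have v1: "X N + 1 \<le> v" unfolding v_def using finS by auto
    have v2: "\<And>i. i \<in> S \<Longrightarrow> X i + K \<le> v" unfolding v_def using finS by auto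
    have v3: "v = X N + 1 \<or> (\<exists>i\<in>S. v = X i + K)"
    proof -
      have "v \<in> insert (X N + 1) ((\<lambda>i. X i + K) ` S)" unfolding v_def
        by (rule Max_in) (use finS in auto)
      then show ?thesis by auto
    qed
    define X' where "X' = X(Suc N := v)"
    have rkS: "rk p (Suc N) = rk p N" using False by (simp add: rk_Suc)
    have key: "v + HH m a (rk p (Suc N)) + int m - int (Suc N) \<le> X i + K - 1"
      if hi: "1 \<le> i" "i \<le> N" "upper p i" "p (Suc N) < p i"
        "\<forall>l. i < l \<and> l \<le> N \<and> \<not> upper p l \<longrightarrow> p l < p i" for i
    proof -
      have dI: "X N + HH m a (rk p N) + int m - int N \<le> X i + K - 1" using Id[of i] hi by auto
      from v3 show ?thesis
      proof
        assume "v = X N + 1" then show ?thesis using dI rkS by auto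
      next
        assume "\<exists>i'\<in>S. v = X i' + K"
        then obtain i' where i': "i' \<in> S" "v = X i' + K" by auto
        have i'1: "1 \<le> i'" "i' \<le> N" "upper p i'" "p i' < p (Suc N)" using i' unfolding S_def by auto
        have "p i' < p i" using i'1(4) hi(4) by linarith
        then have "i' < i" using upper_lt[OF i'1(3)] hi(1) by blast
        then have i2: "2 \<le> i" using i'1 by auto
        have "X (i - 1) + GG m a (rk p i) \<le> X i" using Ic[OF i2 hi(2,3)] .
        moreover have "X i' \<le> X (i - 1)" using Ia' \<open>i' < i\<close> i'1 hi by auto
        moreover have "HH m a (rk p (Suc N)) \<le> HH m a (rk p i)"
          using HH_anti rkm[of i] hi by auto
        moreover have "GG m a (rk p i) = HH m a (rk p i) + int m" by (rule GG_HH)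
        moreover have "int i \<le> int N" using hi by auto
        ultimately show ?thesis using i' by auto
      qed
    qed
    have "Inv m p K (Suc N) X'"
      unfolding Inv_def a_def[symmetric]
    proof (intro conjI allI impI)
      fix i j assume h: "1 \<le> i \<and> i < j \<and> j \<le> Suc N"
      show "X' i < X' j"
      proof (cases "j = Suc N")
        case True
        then have "X i \<le> X N" using h Ia' by auto
        then show ?thesis using h True v1 unfolding X'_def by auto
      next
        case False then show ?thesis using h Ia unfolding X'_def by auto
      qed
    next
      fix i j assume h: "1 \<le> i \<and> i < j \<and> j \<le> Suc N \<and> upper p i \<and> \<not> upper p j"
      show "(X' j - X' i < K) = (p j < p i)"
      proof (cases "j = Suc N")
        case False then show ?thesis using h Ib unfolding X'_def by auto
      next
        case True
        have iN: "i \<le> N" using h True by auto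
        have ne: "p i \<noteq> p (Suc N)" using inj h True unfolding inj_def by auto
        show ?thesis
        proof (cases "p i < p (Suc N)")
          case True
          then have "i \<in> S" unfolding S_def using h iN by auto
          then have "X i + K \<le> v" by (rule v2)
          then show ?thesis using True \<open>j = Suc N\<close> h unfolding X'_def by auto
        next
          case False
          then have lt: "p (Suc N) < p i" using ne by auto
          have "\<forall>l. i < l \<and> l \<le> N \<and> \<not> upper p l \<longrightarrow> p l < p i"
          proof (intro allI impI)
            fix l assume "i < l \<and> l \<le> N \<and> \<not> upper p l"
            then have "p l < p (Suc N)" using lower_lt[OF inj av _ low, of l] N by auto
            then show "p l < p i" using lt by auto
          qed
          then have "v + HH m a (rk p (Suc N)) + int m - int (Suc N) \<le> X i + K - 1"
            using key[of i] h iN lt by auto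
          moreover have "0 \<le> HH m a (rk p (Suc N))" unfolding HH_def by simp
          ultimately show ?thesis using lt \<open>j = Suc N\<close> iN N unfolding X'_def by auto
        qed
      qed
    next
      fix j assume h: "2 \<le> j \<and> j \<le> Suc N \<and> upper p j"
      then have "j \<noteq> Suc N" using low by auto
      then show "X' (j - 1) + GG m a (rk p j) \<le> X' j" using h Ic unfolding X'_def by auto
    next
      fix i assume h: "1 \<le> i \<and> i \<le> Suc N \<and> upper p i \<and> (\<forall>l. i < l \<and> l \<le> Suc N \<and> \<not> upper p l \<longrightarrow> p l < p i)"
      then have iN: "i \<le> N" using low by (metis le_Suc_eq)
      have lt: "p (Suc N) < p i" using h iN low by auto
      have "v + HH m a (rk p (Suc N)) + int m - int (Suc N) \<le> X i + K - 1"
        using key[of i] h iN lt by auto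
      then show "X' (Suc N) + HH m a (rk p (Suc N)) + int m - int (Suc N) \<le> X' i + K - 1"
        using iN unfolding X'_def by auto
    qed
    then show ?thesis by blast
  qed
qed



lemma key_embed:
  assumes inj: "inj p" and av: "\<not> perm_contains m p 3 pat321"
    and Kb: "int m * 2 ^ (rk p m - 1) \<le> K"
  shows "\<exists>X::nat \<Rightarrow> int. (\<forall>i j. 1 \<le> i \<and> i < j \<and> j \<le> m \<longrightarrow> X i < X j) \<and>
     (\<forall>i j. 1 \<le> i \<and> i < j \<and> j \<le> m \<and> upper p i \<and> \<not> upper p j \<longrightarrow> (X j - X i < K \<longleftrightarrow> p j < p i))"
proof -
  have base: "Inv m p K 0 X" for X unfolding Inv_def by simp
  have "N \<le> m \<Longrightarrow> \<exists>X. Inv m p K N X" for N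
  proof (induction N)
    case 0 show ?case using base by blast
  next
    case (Suc N)
    then obtain X where "Inv m p K N X" by auto
    then show ?case using Inv_step[OF inj av Kb _ Suc.prems] by blast
  qed
  then obtain X where X: "Inv m p K m X" by blast
  have 1: "\<forall>i j. 1 \<le> i \<and> i < j \<and> j \<le> m \<longrightarrow> X i < X j"
    using X unfolding Inv_def by (elim conjE)
  have 2: "\<forall>i j. 1 \<le> i \<and> i < j \<and> j \<le> m \<and> upper p i \<and> \<not> upper p j \<longrightarrow> (X j - X i < K \<longleftrightarrow> p j < p i)"
    using X unfolding Inv_def by (elim conjE)
  show ?thesis using 1 2 by blast
qed



lemma int_le_div: "0 < (n::int) \<Longrightarrow> (k \<le> D div n) = (k * n \<le> D)"
  by (smt (verit) minus_div_mult_eq_mod nonzero_mult_div_cancel_right pos_mod_sign zdiv_mono1)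

lemma ceil_lemma:
  assumes "0 < (n::int)"
  shows "d * n < D \<longleftrightarrow> d < (D + n - 1) div n"
proof -
  have "d < (D + n - 1) div n \<longleftrightarrow> d + 1 \<le> (D + n - 1) div n" by linarith
  also have "\<dots> \<longleftrightarrow> (d + 1) * n \<le> D + n - 1" using int_le_div[OF assms] by blast
  also have "\<dots> \<longleftrightarrow> d * n < D" by (simp add: algebra_simps, linarith)
  finally show ?thesis by simp
qed

lemma periodic_nat:
  assumes "\<forall>i. w (i + int n) = w i + int n"
  shows "w (c + int k * int n) = w c + int k * int n"
proof (induction k)
  case 0 then show ?case by simp
next
  case (Suc k)
  have "w (c + int (Suc k) * int n) = w ((c + int k * int n) + int n)" by (simp add: algebra_simps)
  also have "\<dots> = w (c + int k * int n) + int n" using assms by blast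
  finally show ?case using Suc by (simp add: algebra_simps)
qed

lemma periodic:
  assumes "\<forall>i. w (i + int n) = w i + int n"
  shows "w (c + k * int n) = w c + k * int n"
proof (cases "0 \<le> k")
  case True
  then obtain k' where "k = int k'" by (metis nonneg_int_cases)
  then show ?thesis using periodic_nat[OF assms] by simp
next
  case False
  then obtain k' where k': "k = - int k'" by (metis neg_int_cases less_le not_le)
  have "w c = w ((c + k * int n) + int k' * int n)" using k' by (simp add: algebra_simps)
  also have "\<dots> = w (c + k * int n) + int k' * int n" using periodic_nat[OF assms] by blast
  finally show ?thesis using k' by (simp add: algebra_simps)
qed

lemma embed:
  fixes X :: "nat \<Rightarrow> int" and U L :: "int \<Rightarrow> int" and w :: "int \<Rightarrow> int"
  assumes injp: "inj p" and av: "\<not> perm_contains m p 3 pat321" and injw: "inj w"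
    and X1: "\<forall>i j. 1 \<le> i \<and> i < j \<and> j \<le> m \<longrightarrow> X i < X j"
    and X2: "\<forall>i j. 1 \<le> i \<and> i < j \<and> j \<le> m \<and> upper p i \<and> \<not> upper p j \<longrightarrow> (X j - X i < K \<longleftrightarrow> p j < p i)"
    and K0: "0 < K"
    and UU: "\<And>k k'. k < k' \<Longrightarrow> U k < U k'"
    and LL: "\<And>k k'. k < k' \<Longrightarrow> L k < L k'"
    and UL: "\<And>k k'. k < k' \<Longrightarrow> U k < L k' \<and> L k < U k'"
    and ne: "\<And>k k'. U k \<noteq> L k'"
    and wU: "\<And>k k'. k < k' \<Longrightarrow> w (U k) < w (U k')"
    and wL: "\<And>k k'. k < k' \<Longrightarrow> w (L k) < w (L k')"
    and wUL: "\<And>k k'. w (L k') < w (U k) \<longleftrightarrow> k' - k < K"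
  shows "affine_contains w m p"
proof -
  define idx where "idx = (\<lambda>j. if upper p j then U (X j) else L (X j))"
  have Xlt: "X a < X b \<longleftrightarrow> a < b" if "a \<in> {1..m}" "b \<in> {1..m}" for a b
    using X1 that by (metis atLeastAtMost_iff linorder_neq_iff order.asym)
  have wUi: "w (U x) < w (U y) \<longleftrightarrow> x < y" for x y
    using wU by (metis linorder_neq_iff order.asym)
  have wLi: "w (L x) < w (L y) \<longleftrightarrow> x < y" for x y
    using wL by (metis linorder_neq_iff order.asym)
  have wne: "w (U x) \<noteq> w (L y)" for x y using injw ne unfolding inj_def by metis
  show ?thesis unfolding affine_contains_def
  proof (intro exI[of _ idx] conjI)
    show "strict_mono_on {1..m} idx"
      unfolding strict_mono_on_def
    proof (intro allI impI)
      fix r s assume h: "r \<in> {1..m} \<and> s \<in> {1..m} \<and> r < s"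
      then have "X r < X s" using Xlt by blast
      then show "idx r < idx s" unfolding idx_def using UU LL UL by auto
    qed
    show "\<forall>a\<in>{1..m}. \<forall>b\<in>{1..m}. (w (idx a) < w (idx b)) = (p a < p b)"
    proof (intro ballI)
      fix a b assume a: "a \<in> {1..m}" and b: "b \<in> {1..m}"
      have pne: "a \<noteq> b \<Longrightarrow> p a \<noteq> p b" using injp unfolding inj_def by blast
      show "(w (idx a) < w (idx b)) = (p a < p b)"
      proof (cases "upper p a")
        case ua: True
        show ?thesis
        proof (cases "upper p b")
          case ub: True
          have "(w (idx a) < w (idx b)) = (a < b)" unfolding idx_def using ua ub wUi Xlt a b by simp
          also have "\<dots> = (p a < p b)" using upper_iff[OF injp ua ub] a b by simp
          finally show ?thesis .
        next
          case lb: False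
          then have ab: "a \<noteq> b" using ua by auto
          have e1: "(w (idx a) < w (idx b)) = (\<not> w (L (X b)) < w (U (X a)))"
            unfolding idx_def using ua lb wne[of "X a" "X b"] by auto
          show ?thesis
          proof (cases "a < b")
            case True
            have "(X b - X a < K) = (p b < p a)" using X2 a b True ua lb by auto
            then show ?thesis using e1 wUL pne[OF ab] by auto
          next
            case False
            then have "b < a" using ab by auto
            then have "X b < X a" using Xlt a b by blast
            moreover have "p b < p a" using ua \<open>b < a\<close> b unfolding upper_def by auto
            ultimately show ?thesis using e1 wUL K0 by auto
          qed
        qed
      next
        case la: False
        show ?thesis
        proof (cases "upper p b")
          case ub: True
          then have ab: "a \<noteq> b" using la by auto
          have e1: "(w (idx a) < w (idx b)) = (X a - X b < K)"
            unfolding idx_def using la ub wUL by auto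
          show ?thesis
          proof (cases "b < a")
            case True
            have "(X a - X b < K) = (p a < p b)" using X2 a b True ub la by auto
            then show ?thesis using e1 by auto
          next
            case False
            then have "a < b" using ab by auto
            then have "X a < X b" using Xlt a b by blast
            moreover have "p a < p b" using ub \<open>a < b\<close> a unfolding upper_def by auto
            ultimately show ?thesis using e1 K0 by auto
          qed
        next
          case lb: False
          have "(w (idx a) < w (idx b)) = (a < b)" unfolding idx_def using la lb wLi Xlt a b by simp
          also have "\<dots> = (p a < p b)"
          proof
            assume "a < b" then show "p a < p b" using lower_lt[OF injp av la lb] b by auto
          next
            assume h: "p a < p b"
            show "a < b"
            proof (rule ccontr)
              assume "\<not> a < b"
              then have "b < a" using h by (cases "a = b") auto
              then have "p b < p a" using lower_lt[OF injp av lb la] a by auto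
              then show False using h by simp
            qed
          qed
          finally show ?thesis .
        qed
      qed
    qed
  qed
qed



lemma pow_bound:
  assumes "2 \<le> m"
  shows "int m * 2 ^ (a - 1) \<le> int (m ^ (a + 1))"
proof -
  have "(2::nat) ^ (a - 1) \<le> m ^ (a - 1)" using assms by (intro power_mono) auto
  then have "m * 2 ^ (a - 1) \<le> m * m ^ (a - 1)" by simp
  also have "\<dots> = m ^ Suc (a - 1)" by simp
  also have "\<dots> \<le> m ^ (a + 1)" using assms by (intro power_increasing) auto
  finally have "m * 2 ^ (a - 1) \<le> m ^ (a + 1)" .
  then have "int (m * 2 ^ (a - 1)) \<le> int (m ^ (a + 1))" by (simp only: of_nat_le_iff)
  then show ?thesis by simp
qed

lemma mul_ge: "1 \<le> (d::int) \<Longrightarrow> 0 < n \<Longrightarrow> n \<le> d * n"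
  using mult_right_mono[of 1 d n] by simp
lemma mul_le: "(d::int) \<le> -1 \<Longrightarrow> 0 < n \<Longrightarrow> d * n \<le> - n"
  using mult_right_mono[of d "-1" n] by simp

lemma shift_ne:
  assumes "0 < (n::int)" "x \<noteq> y" "\<bar>x - y\<bar> < n"
  shows "x + k * n \<noteq> y + k' * n"
proof
  assume h: "x + k * n = y + k' * n"
  then have e: "x - y = (k' - k) * n" by (simp add: algebra_simps)
  consider "k' - k = 0" | "1 \<le> k' - k" | "k' - k \<le> -1" by linarith
  then show False
  proof cases
    case 1 then show False using e assms(2) by simp
  next
    case 2 then show False using mul_ge[OF 2 assms(1)] e assms(3) by linarith
  next
    case 3 then show False using mul_le[OF 3 assms(1)] e assms(3) by linarith
  qed
qed

lemma part1:
  fixes m n :: nat and p :: "nat \<Rightarrow> nat" and w :: "int \<Rightarrow> int" and \<alpha> \<beta> :: int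
  assumes m2: "m \<ge> 2" and perm: "p permutes {1..m}"
    and av: "\<not> perm_contains m p 3 pat321"
    and n2: "n \<ge> 2" and aff: "affine_perm n w" and nc: "\<not> affine_contains w m p"
    and ab: "1 \<le> \<alpha>" "\<alpha> < \<beta>" "\<beta> \<le> int n"
  shows "\<bar>w \<beta> - w \<alpha>\<bar> div int n \<le> int (m ^ (rk p m + 1) + 1)"
proof (rule ccontr)
  define a where "a = rk p m"
  define B where "B = int (m ^ (a + 1))"
  assume "\<not> ?thesis"
  then have big: "B + 2 \<le> \<bar>w \<beta> - w \<alpha>\<bar> div int n" unfolding B_def a_def by simp
  have injp: "inj p" using perm by (rule permutes_inj)
  have injw: "inj w" using aff unfolding affine_perm_def by (simp add: bij_is_inj)
  have per: "\<forall>i. w (i + int n) = w i + int n" using aff unfolding affine_perm_def by blast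
  have nn: "0 < int n" using n2 by simp
  have Kb: "int m * 2 ^ (rk p m - 1) \<le> K" if "B + 1 \<le> K" for K
    using pow_bound[OF m2, of a] that unfolding B_def a_def by linarith
  have ne: "w \<alpha> \<noteq> w \<beta>" using injw ab(2) unfolding inj_def by auto
  have abn: "\<bar>\<alpha> - \<beta>\<bar> < int n" "\<bar>\<beta> - \<alpha>\<bar> < int n" using ab by auto
  have wper: "w (c + k * int n) = w c + k * int n" for c k using periodic[OF per] .
  show False
  proof (cases "w \<beta> < w \<alpha>")
    case True
    define D where "D = w \<alpha> - w \<beta>"
    define K where "K = (D + int n - 1) div int n"
    have "D div int n \<le> K" unfolding K_def using nn by (intro zdiv_mono1) auto
    moreover have "\<bar>w \<beta> - w \<alpha>\<bar> = D" unfolding D_def using True by simp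
    ultimately have KB: "B + 2 \<le> K" using big by simp
    obtain X where X1: "\<forall>i j. 1 \<le> i \<and> i < j \<and> j \<le> m \<longrightarrow> X i < X j"
      and X2: "\<forall>i j. 1 \<le> i \<and> i < j \<and> j \<le> m \<and> upper p i \<and> \<not> upper p j \<longrightarrow> (X j - X i < K \<longleftrightarrow> p j < p i)"
      using key_embed[OF injp av Kb[of K]] KB by auto
    have B0: "0 \<le> B" unfolding B_def by simp
    have "affine_contains w m p"
    proof (rule embed[OF injp av injw X1 X2, where U = "\<lambda>k. \<alpha> + k * int n" and L = "\<lambda>k. \<beta> + k * int n"])
      show "0 < K" using KB B0 by simp
      show "\<And>k k'. k < k' \<Longrightarrow> \<alpha> + k * int n < \<alpha> + k' * int n" using nn by simp
      show "\<And>k k'. k < k' \<Longrightarrow> \<beta> + k * int n < \<beta> + k' * int n" using nn by simp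
      show "\<And>k k'. k < k' \<Longrightarrow> \<alpha> + k * int n < \<beta> + k' * int n \<and> \<beta> + k * int n < \<alpha> + k' * int n"
      proof -
        fix k k' :: int assume "k < k'"
        then have "k * int n + int n \<le> k' * int n" using mul_ge[of "k' - k" "int n"] nn by (simp add: algebra_simps)
        then show "\<alpha> + k * int n < \<beta> + k' * int n \<and> \<beta> + k * int n < \<alpha> + k' * int n" using ab abn nn by linarith
      qed
      show "\<And>k k'. \<alpha> + k * int n \<noteq> \<beta> + k' * int n" using shift_ne[OF nn _ abn(1)] ab by simp
      show "\<And>k k'. k < k' \<Longrightarrow> w (\<alpha> + k * int n) < w (\<alpha> + k' * int n)" using wper nn by simp
      show "\<And>k k'. k < k' \<Longrightarrow> w (\<beta> + k * int n) < w (\<beta> + k' * int n)" using wper nn by simp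
      show "\<And>k k'. w (\<beta> + k' * int n) < w (\<alpha> + k * int n) \<longleftrightarrow> k' - k < K"
      proof -
        fix k k' :: int
        have "w (\<beta> + k' * int n) < w (\<alpha> + k * int n) \<longleftrightarrow> (k' - k) * int n < D"
          unfolding wper D_def by (simp add: algebra_simps)
        also have "\<dots> \<longleftrightarrow> k' - k < K" unfolding K_def by (rule ceil_lemma[OF nn])
        finally show "w (\<beta> + k' * int n) < w (\<alpha> + k * int n) \<longleftrightarrow> k' - k < K" .
      qed
    qed
    then show False using nc by simp
  next
    case False
    then have lt: "w \<alpha> < w \<beta>" using ne by simp
    define D where "D = w \<beta> - w \<alpha>"
    define K where "K = (D + int n - 1) div int n - 1"
    have "D div int n \<le> (D + int n - 1) div int n" using nn by (intro zdiv_mono1) auto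
    moreover have "\<bar>w \<beta> - w \<alpha>\<bar> = D" unfolding D_def using lt by simp
    ultimately have KB: "B + 1 \<le> K" using big unfolding K_def by simp
    obtain X where X1: "\<forall>i j. 1 \<le> i \<and> i < j \<and> j \<le> m \<longrightarrow> X i < X j"
      and X2: "\<forall>i j. 1 \<le> i \<and> i < j \<and> j \<le> m \<and> upper p i \<and> \<not> upper p j \<longrightarrow> (X j - X i < K \<longleftrightarrow> p j < p i)"
      using key_embed[OF injp av Kb[of K]] KB by auto
    have B0: "0 \<le> B" unfolding B_def by simp
    have "affine_contains w m p"
    proof (rule embed[OF injp av injw X1 X2, where U = "\<lambda>k. \<beta> + k * int n" and L = "\<lambda>k. \<alpha> + (k + 1) * int n"])
      show "0 < K" using KB B0 by simp
      show "\<And>k k'. k < k' \<Longrightarrow> \<beta> + k * int n < \<beta> + k' * int n" using nn by simp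
      show "\<And>k k'. k < k' \<Longrightarrow> \<alpha> + (k + 1) * int n < \<alpha> + (k' + 1) * int n" using nn by simp
      show "\<And>k k'. k < k' \<Longrightarrow> \<beta> + k * int n < \<alpha> + (k' + 1) * int n \<and> \<alpha> + (k + 1) * int n < \<beta> + k' * int n"
      proof -
        fix k k' :: int assume "k < k'"
        then have "k * int n + int n \<le> k' * int n" using mul_ge[of "k' - k" "int n"] nn by (simp add: algebra_simps)
        then show "\<beta> + k * int n < \<alpha> + (k' + 1) * int n \<and> \<alpha> + (k + 1) * int n < \<beta> + k' * int n"
        proof -
          have "(k' + 1) * int n = k' * int n + int n" "(k + 1) * int n = k * int n + int n"
            by (simp_all add: algebra_simps)
          then show ?thesis using \<open>k * int n + int n \<le> k' * int n\<close> ab abn nn by linarith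
        qed
      qed
      show "\<And>k k'. \<beta> + k * int n \<noteq> \<alpha> + (k' + 1) * int n" using shift_ne[OF nn _ abn(2)] ab by simp
      show "\<And>k k'. k < k' \<Longrightarrow> w (\<beta> + k * int n) < w (\<beta> + k' * int n)" using wper nn by simp
      show "\<And>k k'. k < k' \<Longrightarrow> w (\<alpha> + (k + 1) * int n) < w (\<alpha> + (k' + 1) * int n)" using wper nn by simp
      show "\<And>k k'. w (\<alpha> + (k' + 1) * int n) < w (\<beta> + k * int n) \<longleftrightarrow> k' - k < K"
      proof -
        fix k k' :: int
        have "w (\<alpha> + (k' + 1) * int n) < w (\<beta> + k * int n) \<longleftrightarrow> (k' + 1 - k) * int n < D"
          unfolding wper D_def by (simp add: algebra_simps)
        also have "\<dots> \<longleftrightarrow> k' + 1 - k < (D + int n - 1) div int n" by (rule ceil_lemma[OF nn])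
        also have "\<dots> \<longleftrightarrow> k' - k < K" unfolding K_def by linarith
        finally show "w (\<alpha> + (k' + 1) * int n) < w (\<beta> + k * int n) \<longleftrightarrow> k' - k < K" .
      qed
    qed
    then show False using nc by simp
  qed
qed



lemma card_pairs: "card {(a, b). 1 \<le> a \<and> a < b \<and> b \<le> int n} = n choose 2"
proof (induction n)
  case 0
  have e0: "{(a, b). 1 \<le> a \<and> a < b \<and> b \<le> (0::int)} = {}" by auto
  show ?case unfolding of_nat_0 e0 by simp
next
  case (Suc n)
  have e: "{(a, b). 1 \<le> a \<and> a < b \<and> b \<le> int (Suc n)} =
     {(a, b). 1 \<le> a \<and> a < b \<and> b \<le> int n} \<union> (\<lambda>a. (a, int n + 1)) ` {1..int n}"
    by auto
  have fin: "finite {(a, b). 1 \<le> a \<and> a < b \<and> b \<le> int n}"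
  proof -
    have "{(a, b). 1 \<le> a \<and> a < b \<and> b \<le> int n} \<subseteq> {1..int n} \<times> {1..int n}" by auto
    then show ?thesis by (rule finite_subset) auto
  qed
  have disj: "{(a, b). 1 \<le> a \<and> a < b \<and> b \<le> int n} \<inter> (\<lambda>a. (a, int n + 1)) ` {1..int n} = {}"
    by auto
  have ci: "card ((\<lambda>a. (a, int n + 1)) ` {1..int n}) = n"
    by (subst card_image) (auto simp: inj_on_def)
  have "card {(a, b). 1 \<le> a \<and> a < b \<and> b \<le> int (Suc n)} = (n choose 2) + n"
    unfolding e by (subst card_Un_disjoint) (use fin disj ci Suc.IH in auto)
  also have "\<dots> = Suc n choose 2"
    by (simp add: numeral_2_eq_2 binomial_Suc_Suc)
  finally show ?case .
qed

lemma part2: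
  fixes n :: nat and w :: "int \<Rightarrow> int" and Bp :: nat
  assumes n1: "1 \<le> n" and aff: "affine_perm n w"
    and bnd: "\<forall>\<alpha> \<beta>. 1 \<le> \<alpha> \<and> \<alpha> < \<beta> \<and> \<beta> \<le> int n \<longrightarrow> \<bar>w \<beta> - w \<alpha>\<bar> div int n \<le> int Bp"
  shows "affine_length n w \<le> (Bp + 1) * (n choose 2)"
proof -
  define A where "A = {(i, j). 1 \<le> i \<and> i \<le> int n \<and> i < j \<and> w i > w j}"
  define rr where "rr j = (j - 1) mod int n + 1" for j
  define kk where "kk j = (j - 1) div int n" for j
  define f where "f = (\<lambda>(i, j). if i < rr j then ((i, rr j), kk j) else ((rr j, i), kk j - 1))"
  define P where "P = {(a, b). 1 \<le> a \<and> a < b \<and> b \<le> int n}"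
  define T where "T = P \<times> {0..int Bp}"
  have nn: "0 < int n" using n1 by simp
  have per: "\<forall>i. w (i + int n) = w i + int n" using aff unfolding affine_perm_def by blast
  have injw: "inj w" using aff unfolding affine_perm_def by (simp add: bij_is_inj)
  have wper: "w (c + k * int n) = w c + k * int n" for c k using periodic[OF per] .
  have dm: "j = rr j + kk j * int n" for j unfolding rr_def kk_def
    using div_mult_mod_eq[of "j - 1" "int n"] by (simp add: algebra_simps)
  have r1: "1 \<le> rr j" "rr j \<le> int n" for j
    unfolding rr_def using pos_mod_bound[OF nn, of "j - 1"] pos_mod_sign[OF nn, of "j - 1"] by linarith+
  have F: "0 \<le> kk j \<and> rr j \<noteq> i \<and> w (rr j) + kk j * int n < w i \<and> (rr j < i \<longrightarrow> 1 \<le> kk j)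
      \<and> kk j \<le> \<bar>w i - w (rr j)\<bar> div int n" if "(i, j) \<in> A" for i j
  proof -
    have h: "1 \<le> i" "i \<le> int n" "i < j" "w j < w i" using that unfolding A_def by auto
    have k0: "0 \<le> kk j" unfolding kk_def using h nn by (simp add: pos_imp_zdiv_nonneg_iff)
    have wj: "w j = w (rr j) + kk j * int n" using wper dm[of j] by metis
    have "0 \<le> kk j * int n" using k0 nn by simp
    then have rne: "rr j \<noteq> i" using h wj by auto
    have lt: "w (rr j) + kk j * int n < w i" using h wj by simp
    have k1: "rr j < i \<longrightarrow> 1 \<le> kk j"
    proof
      assume "rr j < i"
      then have "kk j \<noteq> 0" using dm[of j] h by auto
      then show "1 \<le> kk j" using k0 by simp
    qed
    have "kk j * int n \<le> \<bar>w i - w (rr j)\<bar>" using lt by linarith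
    then have "kk j \<le> \<bar>w i - w (rr j)\<bar> div int n" using int_le_div[OF nn] by blast
    then show ?thesis using k0 rne lt k1 by blast
  qed
  have sub: "f ` A \<subseteq> T"
  proof
    fix x assume "x \<in> f ` A"
    then obtain i j where ij: "(i, j) \<in> A" and x: "x = f (i, j)" by auto
    have h: "1 \<le> i" "i \<le> int n" using ij unfolding A_def by auto
    note Fij = F[OF ij]
    show "x \<in> T"
    proof (cases "i < rr j")
      case True
      have "\<bar>w (rr j) - w i\<bar> div int n \<le> int Bp" using bnd h True r1[of j] by blast
      then have "kk j \<le> int Bp" using Fij by (simp add: abs_minus_commute)
      then show ?thesis using x True h r1[of j] Fij unfolding f_def T_def P_def by auto
    next
      case False
      then have lt: "rr j < i" using Fij by auto
      have "\<bar>w i - w (rr j)\<bar> div int n \<le> int Bp" using bnd h lt r1[of j] by blast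
      then have "kk j \<le> int Bp" using Fij by simp
      then show ?thesis using x False lt h r1[of j] Fij unfolding f_def T_def P_def by auto
    qed
  qed
  have inj: "inj_on f A"
  proof (rule inj_onI)
    fix x y assume x: "x \<in> A" and y: "y \<in> A" and e: "f x = f y"
    obtain i1 j1 where x1: "x = (i1, j1)" by (cases x)
    obtain i2 j2 where y1: "y = (i2, j2)" by (cases y)
    have F1: "0 \<le> kk j1 \<and> rr j1 \<noteq> i1 \<and> w (rr j1) + kk j1 * int n < w i1 \<and> (rr j1 < i1 \<longrightarrow> 1 \<le> kk j1)"
      using F x x1 by blast
    have F2: "0 \<le> kk j2 \<and> rr j2 \<noteq> i2 \<and> w (rr j2) + kk j2 * int n < w i2 \<and> (rr j2 < i2 \<longrightarrow> 1 \<le> kk j2)"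
      using F y y1 by blast
    have p1: "0 \<le> kk j1 * int n" "0 \<le> kk j2 * int n" using F1 F2 nn by simp_all
    have same: "i1 = i2 \<and> rr j1 = rr j2 \<and> kk j1 = kk j2"
    proof (cases "i1 < rr j1")
      case c1: True
      show ?thesis
      proof (cases "i2 < rr j2")
        case True then show ?thesis using e c1 unfolding x1 y1 f_def by auto
      next
        case False
        then have "i1 = rr j2" "rr j1 = i2" using e c1 unfolding x1 y1 f_def by auto
        then show ?thesis using F1 F2 p1 by auto
      qed
    next
      case c1: False
      show ?thesis
      proof (cases "i2 < rr j2")
        case True
        then have "rr j1 = i2" "i1 = rr j2" using e c1 unfolding x1 y1 f_def by auto
        then show ?thesis using F1 F2 p1 by auto
      next
        case False then show ?thesis using e c1 unfolding x1 y1 f_def by auto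
      qed
    qed
    then have "j1 = j2" using dm[of j1] dm[of j2] by metis
    then show "x = y" using same x1 y1 by simp
  qed
  have finP: "finite P"
  proof -
    have "P \<subseteq> {1..int n} \<times> {1..int n}" unfolding P_def by auto
    then show ?thesis by (rule finite_subset) auto
  qed
  have finT: "finite T" unfolding T_def using finP by simp
  have cT: "card T = (n choose 2) * (Bp + 1)"
  proof -
    have "nat (int Bp + 1) = Bp + 1" by (simp add: nat_add_distrib)
    then show ?thesis unfolding T_def card_cartesian_product P_def card_pairs by simp
  qed
  have "card A \<le> card T" using card_inj_on_le[OF inj sub finT] .
  moreover have "affine_length n w = card A" unfolding affine_length_def A_def by simp
  ultimately show ?thesis using cT by (simp add: mult.commute)
qed


theorem mainTheorem5:
  fixes m n :: nat and p :: "nat \<Rightarrow> nat" and w :: "int \<Rightarrow> int"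
  assumes "m \<ge> 2"
    and "p permutes {1..m}"
    and "indecomposable m p"
    and "\<not> perm_contains m p 3 pat321"
    and "n \<ge> 2"
    and "affine_perm n w"
    and "\<not> affine_contains w m p"
  shows "(\<forall>\<alpha> \<beta>. 1 \<le> \<alpha> \<and> \<alpha> < \<beta> \<and> \<beta> \<le> int n \<longrightarrow>
            \<bar>w \<beta> - w \<alpha>\<bar> div int n \<le> int (m ^ (num_ltr_maxima m p + 1) + 1))
         \<and> affine_length n w \<le> (m ^ (num_ltr_maxima m p + 1) + 2) * (n choose 2)"
proof -
  have nl: "num_ltr_maxima m p = rk p m" unfolding num_ltr_maxima_def rk_def upper_def by simp
  have P1: "\<forall>\<alpha> \<beta>. 1 \<le> \<alpha> \<and> \<alpha> < \<beta> \<and> \<beta> \<le> int n \<longrightarrow>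
            \<bar>w \<beta> - w \<alpha>\<bar> div int n \<le> int (m ^ (num_ltr_maxima m p + 1) + 1)"
    using part1[OF assms(1,2,4,5,6,7)] unfolding nl by blast
  have "affine_length n w \<le> (m ^ (num_ltr_maxima m p + 1) + 1 + 1) * (n choose 2)"
    using part2[OF _ assms(6) P1] assms(5) by simp
  then show ?thesis using P1 by simp
qed

end
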